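(* Let $G$ be one of the (simply connected, non-twisted) Chevalley groups $SL(n,q)$ with $n>2$, $E_6(q)$, $E_7(q)$, $E_8(q)$, $F_4(q)$, $G_2(q)$. Let $T_0$ be a split maximal torus of $G$ and $W=N_G(T_0)/T_0$ the Weyl group, acting on $\mathrm{Irr}\,T_0$ by conjugation. Then the trivial character $1_{T_0}$ is the only $W$-invariant irreducible character of $T_0$.
   Context: $q$ is a prime power; $T_0$ is a maximal torus of $G$ contained in a Borel subgroup (a product of cyclic groups of order $q-1$). *)

theory Defs
  imports Complex_Main
begin

text \<open>The Chevalley groups of the statement, recorded by their type.
  SL n is the simply connected group of type A_(n-1).\<close>
datatype chevalley_type = SL nat | E6 | E7 | E8 | F4 | G2

fun rank :: "chevalley_type \<Rightarrow> nat" where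
  "rank (SL n) = n - 1"
| "rank E6 = 6" | "rank E7 = 7" | "rank E8 = 8" | "rank F4 = 4" | "rank G2 = 2"

text \<open>Simple roots indexed 0 .. rank-1 (Bourbaki numbering shifted by one).
  cartan X i j = <alpha_i, alpha_j coroot> = 2(alpha_i,alpha_j)/(alpha_j,alpha_j).\<close>

definition E8_edge :: "nat \<Rightarrow> nat \<Rightarrow> bool" where
  "E8_edge i j \<longleftrightarrow> {i, j} \<in> {{0,2},{2,3},{3,4},{4,5},{5,6},{6,7},{1,3}}"

fun cartan :: "chevalley_type \<Rightarrow> nat \<Rightarrow> nat \<Rightarrow> int" where
  "cartan (SL n) i j = (if i = j then 2 else if i = j + 1 \<or> j = i + 1 then -1 else 0)"
| "cartan E6 i j = (if i = j then 2 else if E8_edge i j then -1 else 0)"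
| "cartan E7 i j = (if i = j then 2 else if E8_edge i j then -1 else 0)"
| "cartan E8 i j = (if i = j then 2 else if E8_edge i j then -1 else 0)"
| "cartan F4 i j = (if i = j then 2
      else if (i, j) = (1, 2) then -2
      else if (i, j) = (2, 1) then -1
      else if i = j + 1 \<or> j = i + 1 then -1 else 0)"
| "cartan G2 i j = (if i = j then 2
      else if (i, j) = (0, 1) then -1
      else if (i, j) = (1, 0) then -3 else 0)"

text \<open>Split maximal torus T_0 of the simply connected group over the finite field 'a:
  t represents the product of h_(alpha_i)(t i), i < rank; h_(alpha_i) : F_q^* \<rightarrow> T_0,
  and T_0 is the direct product of these (simply connected case).\<close>
definition torus :: "chevalley_type \<Rightarrow> (nat \<Rightarrow> 'a::field) set" where
  "torus X = {t. (\<forall>i < rank X. t i \<noteq> 0) \<and> (\<forall>i \<ge> rank X. t i = 1)}"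

definition torus_mult :: "(nat \<Rightarrow> 'a::field) \<Rightarrow> (nat \<Rightarrow> 'a) \<Rightarrow> (nat \<Rightarrow> 'a)" where
  "torus_mult s t = (\<lambda>i. s i * t i)"

text \<open>Conjugation action of the simple reflection s_i (image in W = N(T_0)/T_0):
  s_i(h_(alpha_j)(c)) = h_(alpha_j)(c) * h_(alpha_i)(c)^(-<alpha_i, alpha_j coroot>).\<close>
definition simple_refl :: "chevalley_type \<Rightarrow> nat \<Rightarrow> (nat \<Rightarrow> 'a::field) \<Rightarrow> (nat \<Rightarrow> 'a)" where
  "simple_refl X i t = t(i := t i * (\<Prod>j<rank X. t j powi (- cartan X i j)))"

inductive_set weyl_action :: "chevalley_type \<Rightarrow> ((nat \<Rightarrow> 'a::field) \<Rightarrow> (nat \<Rightarrow> 'a)) set"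
  for X where
  weyl_id: "id \<in> weyl_action X"
| weyl_step: "w \<in> weyl_action X \<Longrightarrow> i < rank X \<Longrightarrow> simple_refl X i \<circ> w \<in> weyl_action X"

text \<open>Irreducible characters of the finite abelian group T_0 are exactly its linear
  characters, i.e. homomorphisms into the multiplicative group of C.\<close>
definition irr_char :: "chevalley_type \<Rightarrow> ((nat \<Rightarrow> 'a::field) \<Rightarrow> complex) \<Rightarrow> bool" where
  "irr_char X \<chi> \<longleftrightarrow> (\<forall>t \<in> torus X. \<chi> t \<noteq> 0) \<and>
     (\<forall>s \<in> torus X. \<forall>t \<in> torus X. \<chi> (torus_mult s t) = \<chi> s * \<chi> t)"

definition W_invariant :: "chevalley_type \<Rightarrow> ((nat \<Rightarrow> 'a::field) \<Rightarrow> complex) \<Rightarrow> bool" where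
  "W_invariant X \<chi> \<longleftrightarrow> (\<forall>w \<in> weyl_action X. \<forall>t \<in> torus X. \<chi> (w t) = \<chi> t)"

end

theory Submission
  imports Defs
begin

definition ee :: "nat \<Rightarrow> 'a::field \<Rightarrow> nat \<Rightarrow> 'a" where
  "ee i c = (\<lambda>j. if j = i then c else 1)"

lemma ee_torus: "i < rank X \<Longrightarrow> c \<noteq> 0 \<Longrightarrow> ee i c \<in> torus X"
  by (auto simp: ee_def torus_def)

lemma ee_mult: "torus_mult (ee i a) (ee i b) = ee i (a * b)"
  by (auto simp: ee_def torus_mult_def)

lemma prod_ee:
  assumes "j < rank X"
  shows "(\<Prod>k<rank X. (ee j c k) powi (- cartan X i k)) = c powi (- cartan X i j)"
proof -
  have "(\<Prod>k<rank X. (ee j c k) powi (- cartan X i k))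
       = (\<Prod>k<rank X. if k = j then c powi (- cartan X i j) else 1)"
    by (rule prod.cong) (auto simp: ee_def)
  also have "\<dots> = c powi (- cartan X i j)" using assms by (simp add: prod.delta)
  finally show ?thesis .
qed

lemma refl_ee_same:
  assumes "i < rank X"
  shows "simple_refl X i (ee i c) = ee i (c * c powi (- cartan X i i))"
  using prod_ee[OF assms, of c i] by (auto simp: simple_refl_def ee_def)

lemma refl_ee_other:
  assumes "j < rank X" "j \<noteq> i"
  shows "simple_refl X i (ee j c) = torus_mult (ee j c) (ee i (c powi (- cartan X i j)))"
  using prod_ee[OF assms(1), of c i] assms by (auto simp: simple_refl_def ee_def torus_mult_def)

lemma neighbor:
  assumes "i < rank X" "X \<noteq> G2 \<or> i = 0" "\<forall>n. X = SL n \<longrightarrow> n > 2"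
  shows "\<exists>j<rank X. j \<noteq> i \<and> cartan X i j = -1"
proof (cases X)
  case (SL n)
  with assms have n: "n > 2" "i < n - 1" by auto
  show ?thesis
  proof (cases "i + 1 < n - 1")
    case True
    then show ?thesis using SL by (intro exI[of _ "i+1"]) auto
  next
    case False
    then show ?thesis using SL n by (intro exI[of _ "i-1"]) auto
  qed
next
  case E6
  with assms have "i \<in> {0,1,2,3,4,5}" by auto
  then show ?thesis using E6
    apply (elim insertE emptyE)
    apply (rule exI[of _ 2], simp add: E8_edge_def insert_commute)
    apply (rule exI[of _ 3], simp add: E8_edge_def insert_commute)
    apply (rule exI[of _ 3], simp add: E8_edge_def insert_commute)
    apply (rule exI[of _ 4], simp add: E8_edge_def insert_commute)
    apply (rule exI[of _ 5], simp add: E8_edge_def insert_commute)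
    apply (rule exI[of _ 4], simp add: E8_edge_def insert_commute)
    done
next
  case E7
  with assms have "i \<in> {0,1,2,3,4,5,6}" by auto
  then show ?thesis using E7
    apply (elim insertE emptyE)
    apply (rule exI[of _ 2], simp add: E8_edge_def insert_commute)
    apply (rule exI[of _ 3], simp add: E8_edge_def insert_commute)
    apply (rule exI[of _ 3], simp add: E8_edge_def insert_commute)
    apply (rule exI[of _ 4], simp add: E8_edge_def insert_commute)
    apply (rule exI[of _ 5], simp add: E8_edge_def insert_commute)
    apply (rule exI[of _ 4], simp add: E8_edge_def insert_commute)
    apply (rule exI[of _ 5], simp add: E8_edge_def insert_commute)
    done
next
  case E8
  with assms have "i \<in> {0,1,2,3,4,5,6,7}" by auto
  then show ?thesis using E8
    apply (elim insertE emptyE)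
    apply (rule exI[of _ 2], simp add: E8_edge_def insert_commute)
    apply (rule exI[of _ 3], simp add: E8_edge_def insert_commute)
    apply (rule exI[of _ 3], simp add: E8_edge_def insert_commute)
    apply (rule exI[of _ 4], simp add: E8_edge_def insert_commute)
    apply (rule exI[of _ 5], simp add: E8_edge_def insert_commute)
    apply (rule exI[of _ 4], simp add: E8_edge_def insert_commute)
    apply (rule exI[of _ 5], simp add: E8_edge_def insert_commute)
    apply (rule exI[of _ 6], simp add: E8_edge_def insert_commute)
    done
next
  case F4
  with assms have "i \<in> {0,1,2,3}" by auto
  then show ?thesis using F4
    apply (elim insertE emptyE)
    apply (rule exI[of _ 1], simp)
    apply (rule exI[of _ 0], simp)
    apply (rule exI[of _ 1], simp)
    apply (rule exI[of _ 2], simp)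
    done
next
  case G2
  with assms have "i = 0" by auto
  then show ?thesis using G2 by (intro exI[of _ 1]) auto
qed

theorem proposition4p16:
  fixes X :: chevalley_type and \<chi> :: "(nat \<Rightarrow> 'a::{field,finite}) \<Rightarrow> complex"
  assumes "\<forall>n. X = SL n \<longrightarrow> n > 2"
    and "irr_char X \<chi>"
    and "W_invariant X \<chi>"
  shows "\<forall>t \<in> torus X. \<chi> t = 1"
proof -
  have nz: "\<And>t. t \<in> torus X \<Longrightarrow> \<chi> t \<noteq> 0" and
    mul: "\<And>s t. s \<in> torus X \<Longrightarrow> t \<in> torus X \<Longrightarrow> \<chi> (torus_mult s t) = \<chi> s * \<chi> t"
    using assms(2) by (auto simp: irr_char_def)
  have inv: "\<And>i (t::nat \<Rightarrow> 'a). i < rank X \<Longrightarrow> t \<in> torus X \<Longrightarrow> \<chi> (simple_refl X i t) = \<chi> t"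
  proof -
    fix i and t :: "nat \<Rightarrow> 'a" assume "i < rank X" "t \<in> torus X"
    have "simple_refl X i \<circ> id \<in> weyl_action X"
      using \<open>i < rank X\<close> by (intro weyl_step weyl_id)
    then show "\<chi> (simple_refl X i t) = \<chi> t"
      using assms(3) \<open>t \<in> torus X\<close> unfolding W_invariant_def by fastforce
  qed
  have key: "\<And>i j c. i < rank X \<Longrightarrow> j < rank X \<Longrightarrow> (c::'a) \<noteq> 0 \<Longrightarrow>
      \<chi> (ee i (c powi (- cartan X i j))) = 1"
  proof -
    fix i j and c :: 'a assume ij: "i < rank X" "j < rank X" "c \<noteq> 0"
    have ct: "c powi (- cartan X i j) \<noteq> 0" using ij by simp
    show "\<chi> (ee i (c powi (- cartan X i j))) = 1"
    proof (cases "j = i")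
      case True
      have "\<chi> (ee i c) = \<chi> (simple_refl X i (ee i c))"
        using inv ij ee_torus by metis
      also have "\<dots> = \<chi> (torus_mult (ee i c) (ee i (c powi (- cartan X i i))))"
        using refl_ee_same[OF ij(1)] ee_mult by metis
      also have "\<dots> = \<chi> (ee i c) * \<chi> (ee i (c powi (- cartan X i i)))"
        using mul ee_torus ij ct True by metis
      finally show ?thesis using nz ee_torus ij True
        by (metis mult_cancel_left1)
    next
      case False
      have "\<chi> (ee j c) = \<chi> (simple_refl X i (ee j c))"
        using inv ij ee_torus by metis
      also have "\<dots> = \<chi> (ee j c) * \<chi> (ee i (c powi (- cartan X i j)))"
        using refl_ee_other[OF ij(2) False] mul ee_torus ij ct by metis
      finally show ?thesis using nz ee_torus ij
        by (metis mult_cancel_left1)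
    qed
  qed
  have single: "\<And>i c. i < rank X \<Longrightarrow> (c::'a) \<noteq> 0 \<Longrightarrow> \<chi> (ee i c) = 1"
  proof -
    fix i and c :: 'a assume ic: "i < rank X" "c \<noteq> 0"
    show "\<chi> (ee i c) = 1"
    proof (cases "X \<noteq> G2 \<or> i = 0")
      case True
      then obtain j where "j < rank X" "j \<noteq> i" "cartan X i j = -1"
        using neighbor ic assms(1) by blast
      then show ?thesis using key[OF ic(1) \<open>j < rank X\<close> ic(2)] by simp
    next
      case False
      then have X: "X = G2" "i = 1" using ic by auto
      have a: "\<chi> (ee 1 (c powi 3)) = 1"
        using key[of 1 0 c] X ic by simp
      have b: "\<chi> (ee 1 (c powi (-2))) = 1"
        using key[of 1 1 c] X ic by simp
      have "c powi 3 * c powi (-2) = c" using ic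
        by (simp add: power_int_minus field_simps power2_eq_square power3_eq_cube)
      then have "ee 1 c = torus_mult (ee 1 (c powi 3)) (ee 1 (c powi (-2)))"
        by (simp add: ee_mult)
      then show ?thesis using mul a b ee_torus X ic
        by (metis mult_1 power_int_eq_0_iff)
    qed
  qed
  have ind: "\<And>t::nat \<Rightarrow> 'a. t \<in> torus X \<Longrightarrow> (\<forall>i \<ge> k. t i = 1) \<Longrightarrow> \<chi> t = 1" for k
  proof (induction k)
    case 0
    then have "t = ee 0 1" by (auto simp: ee_def)
    moreover have "ee 0 (1::'a) = torus_mult (ee 0 1) (ee 0 1)" by (simp add: ee_mult)
    moreover have "ee 0 (1::'a) \<in> torus X" by (auto simp: ee_def torus_def)
    ultimately show ?case using mul nz 0 by (metis mult_cancel_right1)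
  next
    case (Suc k)
    show ?case
    proof (cases "k < rank X")
      case True
      define t' where "t' = t(k := 1)"
      have t': "t' \<in> torus X" using Suc.prems by (auto simp: t'_def torus_def)
      have "\<forall>i\<ge>k. t' i = 1" using Suc.prems by (auto simp: t'_def)
      then have c1: "\<chi> t' = 1" using Suc.IH t' by blast
      have nzk: "t k \<noteq> 0" using Suc.prems True by (auto simp: torus_def)
      have "t = torus_mult t' (ee k (t k))"
        by (auto simp: t'_def ee_def torus_mult_def)
      then have "\<chi> t = \<chi> t' * \<chi> (ee k (t k))"
        using mul t' ee_torus[OF True nzk] by metis
      then show ?thesis using c1 single[OF True nzk] by simp
    next
      case False
      then have "\<forall>i \<ge> k. t i = 1" using Suc.prems by (auto simp: torus_def)
      then show ?thesis using Suc.IH Suc.prems by blast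
    qed
  qed
  show ?thesis
  proof
    fix t :: "nat \<Rightarrow> 'a" assume t: "t \<in> torus X"
    then have "\<forall>i \<ge> rank X. t i = 1" by (auto simp: torus_def)
    then show "\<chi> t = 1" using ind t by blast
  qed
qed

end
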